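(* Let $\mathbb{L}=(L;s_1^{\mathbb{L}},\dots,s_m^{\mathbb{L}},p_1^{\mathbb{L}},\dots,p_n^{\mathbb{L}})$ be the projective Fraïssé limit of $\mathcal{F}^{(n)}$ (whose underlying space $L$ is a Cantor space). Then each $s_i^{\mathbb{L}}$, $i\in[m]$, is the graph of a homeomorphism of $L$ which fixes all of $p_1^{\mathbb{L}},\dots,p_n^{\mathbb{L}}$.
   Context: Fix $m\in\mathbb{N}$, $n\ge0$; $\sigma^{(n)}=\{s_1,\dots,s_m,p_1,\dots,p_n\}$ with $s_i$ binary relation symbols and $p_j$ constants. A topological structure is a zero-dimensional compact second countable space with closed sets for the $s_i$ and points for the $p_j$; finite ones are discrete. An epimorphism is a continuous surjection $\phi$ with $\phi(s_i^{\mathbb{A}})=s_i^{\mathbb{B}}$ and $\phi(p_j^{\mathbb{A}})=p_j^{\mathbb{B}}$. A binary relation $s$ on $A$ is surjective if each $a$ has $b,c$ with $(a,b),(c,a)\in s$; $a$ is outgoing for $s$ if $|\{b:(b,a)\in s\}|=1$ and $|\{b:(a,b)\in s\}|\ge2$. $\mathcal{F}$: finite $\{s_1,\dots,s_m\}$-structures with all $s_i$ surjective such that (i) every point is outgoing for exactly one of $s_1,s_1^{-1},\dots,s_m,s_m^{-1}$, (ii) if $(a,b)\in s_i$ then $a$ is $s_i$-outgoing or $b$ is $s_i^{-1}$-outgoing. $\mathbb{A}^{(n)}$: universe $A\sqcup[n]$, $s_i^{\mathbb{A}^{(n)}}=s_i^{\mathbb{A}}\cup\{(j,j):j\in[n]\}$,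 $p_j^{\mathbb{A}^{(n)}}=j$; $\mathcal{F}^{(n)}=\{\mathbb{A}^{(n)}:\mathbb{A}\in\mathcal{F}\}$. The projective Fraïssé limit of $\mathcal{F}^{(n)}$ (exists, unique up to isomorphism) is the topological structure $\mathbb{L}$ satisfying: (L1) every member of $\mathcal{F}^{(n)}$ is an epimorphic image of $\mathbb{L}$; (L2) every continuous map from $L$ to a finite discrete set factors as $g\psi$ with $\psi$ an epimorphism of $\mathbb{L}$ onto a member of $\mathcal{F}^{(n)}$; (L3) for epimorphisms $\phi_1,\phi_2\colon\mathbb{L}\to\mathbb{A}\in\mathcal{F}^{(n)}$ there is an automorphism $\alpha$ of $\mathbb{L}$ with $\phi_1=\phi_2\alpha$. *)

theory Defs
  imports "HOL-Analysis.Analysis"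
begin

definition zero_dimensional :: "'a topology \<Rightarrow> bool" where
  "zero_dimensional T \<longleftrightarrow>
     (\<forall>U x. openin T U \<and> x \<in> U \<longrightarrow> (\<exists>V. openin T V \<and> closedin T V \<and> x \<in> V \<and> V \<subseteq> U))"

text \<open>The space is zero-dimensional, compact, second countable (and Hausdorff, as is
  implicit in the paper's notion of a zero-dimensional compact metrizable space).\<close>
definition top_structure ::
  "nat \<Rightarrow> nat \<Rightarrow> 'a topology \<Rightarrow> (nat \<Rightarrow> ('a \<times> 'a) set) \<Rightarrow> (nat \<Rightarrow> 'a) \<Rightarrow> bool" where
  "top_structure m n T s p \<longleftrightarrow>
     Hausdorff_space T \<and> zero_dimensional T \<and> compact_space T \<and> second_countable T \<and>
     (\<forall>i\<in>{1..m}. closedin (prod_topology T T) (s i)) \<and>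
     (\<forall>j\<in>{1..n}. p j \<in> topspace T)"

definition epimorphism ::
  "nat \<Rightarrow> nat \<Rightarrow> 'a topology \<Rightarrow> (nat \<Rightarrow> ('a \<times> 'a) set) \<Rightarrow> (nat \<Rightarrow> 'a)
   \<Rightarrow> 'b set \<Rightarrow> (nat \<Rightarrow> ('b \<times> 'b) set) \<Rightarrow> (nat \<Rightarrow> 'b) \<Rightarrow> ('a \<Rightarrow> 'b) \<Rightarrow> bool" where
  "epimorphism m n T s p B sB pB \<phi> \<longleftrightarrow>
     continuous_map T (discrete_topology B) \<phi> \<and> \<phi> ` topspace T = B \<and>
     (\<forall>i\<in>{1..m}. (\<lambda>(x, y). (\<phi> x, \<phi> y)) ` s i = sB i) \<and>
     (\<forall>j\<in>{1..n}. \<phi> (p j) = pB j)"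

definition automorphism ::
  "nat \<Rightarrow> nat \<Rightarrow> 'a topology \<Rightarrow> (nat \<Rightarrow> ('a \<times> 'a) set) \<Rightarrow> (nat \<Rightarrow> 'a) \<Rightarrow> ('a \<Rightarrow> 'a) \<Rightarrow> bool" where
  "automorphism m n T s p \<alpha> \<longleftrightarrow>
     homeomorphic_map T T \<alpha> \<and>
     (\<forall>i\<in>{1..m}. (\<lambda>(x, y). (\<alpha> x, \<alpha> y)) ` s i = s i) \<and>
     (\<forall>j\<in>{1..n}. \<alpha> (p j) = p j)"

definition surjective_rel :: "'a set \<Rightarrow> ('a \<times> 'a) set \<Rightarrow> bool" where
  "surjective_rel A r \<longleftrightarrow> (\<forall>a\<in>A. (\<exists>b. (a, b) \<in> r) \<and> (\<exists>c. (c, a) \<in> r))"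

definition outgoing :: "('a \<times> 'a) set \<Rightarrow> 'a \<Rightarrow> bool" where
  "outgoing r a \<longleftrightarrow> card {b. (b, a) \<in> r} = 1 \<and> card {b. (a, b) \<in> r} \<ge> 2"

text \<open>Membership in the class F (finite nonempty {s_1..s_m}-structures). The list
  s_1, s_1^-1, ..., s_m, s_m^-1 is indexed by pairs (i, b), b = True meaning s_i,
  b = False meaning its converse.\<close>
definition in_F :: "nat \<Rightarrow> 'a set \<Rightarrow> (nat \<Rightarrow> ('a \<times> 'a) set) \<Rightarrow> bool" where
  "in_F m A s \<longleftrightarrow>
     finite A \<and> A \<noteq> {} \<and>
     (\<forall>i\<in>{1..m}. s i \<subseteq> A \<times> A \<and> surjective_rel A (s i)) \<and>
     (\<forall>a\<in>A. card {(i, b). i \<in> {1..m} \<and> outgoing (if b then s i else (s i)\<inverse>) a} = 1) \<and>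
     (\<forall>i\<in>{1..m}. \<forall>a b. (a, b) \<in> s i \<longrightarrow> outgoing (s i) a \<or> outgoing ((s i)\<inverse>) b)"

definition ext_univ :: "nat \<Rightarrow> 'a set \<Rightarrow> ('a + nat) set" where
  "ext_univ n A = Inl ` A \<union> Inr ` {1..n}"

definition ext_rel :: "nat \<Rightarrow> (nat \<Rightarrow> ('a \<times> 'a) set) \<Rightarrow> nat \<Rightarrow> (('a + nat) \<times> ('a + nat)) set" where
  "ext_rel n s i = (\<lambda>(x, y). (Inl x, Inl y)) ` s i \<union> {(Inr j, Inr j) | j. j \<in> {1..n}}"

definition ext_const :: "nat \<Rightarrow> 'a + nat" where
  "ext_const j = Inr j"

text \<open>Members of F
  (hence of F^(n)) are represented up to isomorphism by structures on subsets of nat;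
  finite discrete sets in (L2) are represented by finite subsets of nat.\<close>
definition proj_fraisse_limit ::
  "nat \<Rightarrow> nat \<Rightarrow> 'a topology \<Rightarrow> (nat \<Rightarrow> ('a \<times> 'a) set) \<Rightarrow> (nat \<Rightarrow> 'a) \<Rightarrow> bool" where
  "proj_fraisse_limit m n T s p \<longleftrightarrow>
     top_structure m n T s p \<and>
     \<comment> \<open>(L1)\<close>
     (\<forall>(A :: nat set) sA. in_F m A sA \<longrightarrow>
        (\<exists>\<phi>. epimorphism m n T s p (ext_univ n A) (ext_rel n sA) ext_const \<phi>)) \<and>
     \<comment> \<open>(L2)\<close>
     (\<forall>(X :: nat set) f. finite X \<and> continuous_map T (discrete_topology X) f \<longrightarrow>
        (\<exists>(A :: nat set) sA \<psi> g. in_F m A sA \<and>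
            epimorphism m n T s p (ext_univ n A) (ext_rel n sA) ext_const \<psi> \<and>
            (\<forall>x\<in>topspace T. f x = g (\<psi> x)))) \<and>
     \<comment> \<open>(L3)\<close>
     (\<forall>(A :: nat set) sA \<phi>1 \<phi>2. in_F m A sA \<and>
        epimorphism m n T s p (ext_univ n A) (ext_rel n sA) ext_const \<phi>1 \<and>
        epimorphism m n T s p (ext_univ n A) (ext_rel n sA) ext_const \<phi>2 \<longrightarrow>
        (\<exists>\<alpha>. automorphism m n T s p \<alpha> \<and> (\<forall>x\<in>topspace T. \<phi>1 x = \<phi>2 (\<alpha> x))))"

end

theory Submission
  imports Defs
begin


definition succs :: "('a \<times> 'a) set \<Rightarrow> 'a \<Rightarrow> 'a set" where
  "succs r x = {y. (x, y) \<in> r}"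
definition preds :: "('a \<times> 'a) set \<Rightarrow> 'a \<Rightarrow> 'a set" where
  "preds r x = {y. (y, x) \<in> r}"

definition updG :: "(nat \<times> 'a \<Rightarrow> 'a \<times> 'a) \<Rightarrow> nat \<Rightarrow> 'a \<Rightarrow> 'a \<Rightarrow> (nat \<times> 'a \<Rightarrow> 'a \<times> 'a)" where
  "updG c k a b = c((k, a) := (b, snd (c (k, a))))"
definition updH :: "(nat \<times> 'a \<Rightarrow> 'a \<times> 'a) \<Rightarrow> nat \<Rightarrow> 'a \<Rightarrow> 'a \<Rightarrow> (nat \<times> 'a \<Rightarrow> 'a \<times> 'a)" where
  "updH c k b a = c((k, b) := (fst (c (k, b)), a))"

locale refine =
  fixes m :: nat and A :: "'a set" and sA :: "nat \<Rightarrow> ('a \<times> 'a) set"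
  assumes inF: "in_F m A sA"
begin

definition CC :: "(nat \<times> 'a \<Rightarrow> 'a \<times> 'a) set" where
  "CC = PiE ({1..m} \<times> A) (\<lambda>(k, x). succs (sA k) x \<times> preds (sA k) x)"

definition BB :: "('a \<times> (nat \<times> 'a \<Rightarrow> 'a \<times> 'a)) set" where
  "BB = A \<times> CC"

definition sB :: "nat \<Rightarrow> (('a \<times> (nat \<times> 'a \<Rightarrow> 'a \<times> 'a)) \<times> ('a \<times> (nat \<times> 'a \<Rightarrow> 'a \<times> 'a))) set" where
  "sB k = {((a, c), (b, c')). a \<in> A \<and> b \<in> A \<and> c \<in> CC \<and> c' \<in> CC \<and> (a, b) \<in> sA k \<and>
      fst (c (k, a)) = b \<and> snd (c' (k, b)) = a \<and>
      (card (preds (sA k) b) = 1 \<longrightarrow> c = updG c' k a b) \<and>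
      (card (succs (sA k) a) = 1 \<longrightarrow> c' = updH c k b a)}"

lemma sB_iff: "((a, c), (b, c')) \<in> sB k \<longleftrightarrow> a \<in> A \<and> b \<in> A \<and> c \<in> CC \<and> c' \<in> CC \<and> (a, b) \<in> sA k \<and>
      fst (c (k, a)) = b \<and> snd (c' (k, b)) = a \<and>
      (card (preds (sA k) b) = 1 \<longrightarrow> c = updG c' k a b) \<and>
      (card (succs (sA k) a) = 1 \<longrightarrow> c' = updH c k b a)"
  unfolding sB_def by simp

lemma finA: "finite A" using inF by (simp add: in_F_def)
lemma neA: "A \<noteq> {}" using inF by (simp add: in_F_def)
lemma subA: "k \<in> {1..m} \<Longrightarrow> sA k \<subseteq> A \<times> A" using inF by (simp add: in_F_def)
lemma surjA: "k \<in> {1..m} \<Longrightarrow> surjective_rel A (sA k)" using inF by (simp add: in_F_def)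

lemma succs_sub: "k \<in> {1..m} \<Longrightarrow> succs (sA k) a \<subseteq> A"
  using subA unfolding succs_def by blast
lemma preds_sub: "k \<in> {1..m} \<Longrightarrow> preds (sA k) a \<subseteq> A"
  using subA unfolding preds_def by blast
lemma succs_fin: "k \<in> {1..m} \<Longrightarrow> finite (succs (sA k) a)"
  using succs_sub finA finite_subset by blast
lemma preds_fin: "k \<in> {1..m} \<Longrightarrow> finite (preds (sA k) a)"
  using preds_sub finA finite_subset by blast
lemma succs_ne: "k \<in> {1..m} \<Longrightarrow> a \<in> A \<Longrightarrow> succs (sA k) a \<noteq> {}"
  using surjA unfolding surjective_rel_def succs_def by blast
lemma preds_ne: "k \<in> {1..m} \<Longrightarrow> a \<in> A \<Longrightarrow> preds (sA k) a \<noteq> {}"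
  using surjA unfolding surjective_rel_def preds_def by blast
lemma succs_card: "k \<in> {1..m} \<Longrightarrow> a \<in> A \<Longrightarrow> card (succs (sA k) a) \<ge> 1"
  using succs_ne succs_fin by (metis card_0_eq less_one not_le)
lemma preds_card: "k \<in> {1..m} \<Longrightarrow> a \<in> A \<Longrightarrow> card (preds (sA k) a) \<ge> 1"
  using preds_ne preds_fin by (metis card_0_eq less_one not_le)


lemma CC_mem: "c \<in> CC \<Longrightarrow> k \<in> {1..m} \<Longrightarrow> a \<in> A \<Longrightarrow>
   fst (c (k, a)) \<in> succs (sA k) a \<and> snd (c (k, a)) \<in> preds (sA k) a"
  unfolding CC_def by (auto simp: PiE_iff mem_Times_iff)

lemma updG_in: "c \<in> CC \<Longrightarrow> k \<in> {1..m} \<Longrightarrow> a \<in> A \<Longrightarrow> b \<in> succs (sA k) a \<Longrightarrow> updG c k a b \<in> CC"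
  unfolding CC_def updG_def by (auto simp: PiE_iff mem_Times_iff extensional_def)
lemma updH_in: "c \<in> CC \<Longrightarrow> k \<in> {1..m} \<Longrightarrow> b \<in> A \<Longrightarrow> a \<in> preds (sA k) b \<Longrightarrow> updH c k b a \<in> CC"
  unfolding CC_def updH_def by (auto simp: PiE_iff mem_Times_iff extensional_def)

lemma CC_ne: "CC \<noteq> {}"
  unfolding CC_def PiE_eq_empty_iff using succs_ne preds_ne by auto

lemma CC_fin: "finite CC"
  unfolding CC_def
  by (rule finite_PiE) (use finA succs_fin preds_fin in auto)

lemma sB_sub: "sB k \<subseteq> BB \<times> BB"
  unfolding sB_def BB_def by auto

lemma card1_single: "finite S \<Longrightarrow> x \<in> S \<Longrightarrow> card S = 1 \<Longrightarrow> S = {x}"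
  by (metis card_1_singletonE singletonD)

lemma restore1: "fst (c (k, a)) = b \<Longrightarrow> snd (c (k, b)) = a \<Longrightarrow> updG (updH c k b a) k a b = c"
  unfolding updG_def updH_def
proof (rule ext)
  fix z
  assume "fst (c (k, a)) = b" "snd (c (k, b)) = a"
  then show "((c((k, b) := (fst (c (k, b)), a)))((k, a) := (b, snd ((c((k, b) := (fst (c (k, b)), a))) (k, a))))) z = c z"
    by (cases "z = (k, a)"; cases "z = (k, b)") (auto intro: prod_eqI)
qed

lemma restore2: "fst (c (k, a)) = b \<Longrightarrow> snd (c (k, b)) = a \<Longrightarrow> updG (updH (updG c k a b2) k b a) k a b = c"
  unfolding updG_def updH_def
proof (rule ext)
  fix z
  assume "fst (c (k, a)) = b" "snd (c (k, b)) = a"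
  then show "((c((k, a) := (b2, snd (c (k, a))), (k, b) := (fst ((c((k, a) := (b2, snd (c (k, a))))) (k, b)), a)))
          ((k, a) := (b, snd ((c((k, a) := (b2, snd (c (k, a))), (k, b) := (fst ((c((k, a) := (b2, snd (c (k, a))))) (k, b)), a))) (k, a))))) z = c z"
    by (cases "z = (k, a)"; cases "z = (k, b)") (auto intro: prod_eqI)
qed

lemma restore3: "fst (c (k, a)) = b \<Longrightarrow> snd (c (k, b)) = a \<Longrightarrow> updH (updG c k a b) k b a = c"
  unfolding updG_def updH_def
proof (rule ext)
  fix z
  assume "fst (c (k, a)) = b" "snd (c (k, b)) = a"
  then show "((c((k, a) := (b, snd (c (k, a)))))((k, b) := (fst ((c((k, a) := (b, snd (c (k, a))))) (k, b)), a))) z = c z"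
    by (cases "z = (k, a)"; cases "z = (k, b)") (auto intro: prod_eqI)
qed

lemma restore4: "fst (c (k, a)) = b \<Longrightarrow> snd (c (k, b)) = a \<Longrightarrow> updH (updG (updH c k b a2) k a b) k b a = c"
  unfolding updG_def updH_def
proof (rule ext)
  fix z
  assume "fst (c (k, a)) = b" "snd (c (k, b)) = a"
  then show "((c((k, b) := (fst (c (k, b)), a2), (k, a) := (b, snd ((c((k, b) := (fst (c (k, b)), a2))) (k, a)))))
          ((k, b) := (fst ((c((k, b) := (fst (c (k, b)), a2), (k, a) := (b, snd ((c((k, b) := (fst (c (k, b)), a2))) (k, a))))) (k, b)), a))) z = c z"
    by (cases "z = (k, a)"; cases "z = (k, b)") (auto intro: prod_eqI)
qed

lemma S1:
  assumes k: "k \<in> {1..m}" and a: "a \<in> A" and c: "c \<in> CC"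
  shows "((a, c), (fst (c (k, a)), updH c k (fst (c (k, a))) a)) \<in> sB k"
proof -
  define b where "b = fst (c (k, a))"
  have bs: "b \<in> succs (sA k) a" and hs: "snd (c (k, a)) \<in> preds (sA k) a"
    using CC_mem[OF c k a] b_def by auto
  have ab: "(a, b) \<in> sA k" using bs by (simp add: succs_def)
  have bA: "b \<in> A" using bs succs_sub[OF k] by blast
  have ap: "a \<in> preds (sA k) b" using ab by (simp add: preds_def)
  have hb: "snd (c (k, b)) \<in> preds (sA k) b" using CC_mem[OF c k bA] by blast
  have c': "updH c k b a \<in> CC" using updH_in[OF c k bA ap] .
  have "card (preds (sA k) b) = 1 \<longrightarrow> c = updG (updH c k b a) k a b"
  proof
    assume "card (preds (sA k) b) = 1"
    then have "preds (sA k) b = {a}" using card1_single[OF preds_fin[OF k] ap] by simp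
    then have "snd (c (k, b)) = a" using hb by simp
    then show "c = updG (updH c k b a) k a b"
      using restore1[of c k a b] b_def by simp
  qed
  moreover have "snd (updH c k b a (k, b)) = a" by (simp add: updH_def)
  ultimately show ?thesis
    unfolding b_def[symmetric] sB_iff using a bA c c' ab by (intro conjI) (simp_all only: b_def[symmetric], blast+)
qed

lemma S2:
  assumes k: "k \<in> {1..m}" and a: "a \<in> A" and c: "c \<in> CC"
    and r1: "card (succs (sA k) a) = 1" and y: "((a, c), y) \<in> sB k"
  shows "y = (fst (c (k, a)), updH c k (fst (c (k, a))) a)"
proof -
  obtain b c' where yy: "y = (b, c')" by (cases y)
  have "((a, c), (b, c')) \<in> sB k" using y yy by simp
  then have h: "fst (c (k, a)) = b" "card (succs (sA k) a) = 1 \<longrightarrow> c' = updH c k b a"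
    unfolding sB_iff by blast+
  show ?thesis using yy h r1 by simp
qed

lemma S3:
  assumes k: "k \<in> {1..m}" and a: "a \<in> A" and c: "c \<in> CC"
    and r1: "card (succs (sA k) a) \<noteq> 1"
  shows "card {y. ((a, c), y) \<in> sB k} \<ge> 2"
proof -
  define b where "b = fst (c (k, a))"
  have fb: "fst (c (k, a)) = b" using b_def by simp
  have bs: "b \<in> succs (sA k) a"
    using CC_mem[OF c k a] fb by auto
  have "card (succs (sA k) a) \<ge> 2" using r1 succs_card[OF k a] by linarith
  moreover have "\<not> succs (sA k) a \<subseteq> {b}"
  proof
    assume "succs (sA k) a \<subseteq> {b}"
    then have "card (succs (sA k) a) \<le> card {b}" by (intro card_mono) auto
    then show False using \<open>card (succs (sA k) a) \<ge> 2\<close> by simp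
  qed
  then obtain b2 where b2: "b2 \<in> succs (sA k) a" "b2 \<noteq> b" by blast
  have ab: "(a, b) \<in> sA k" using bs by (simp add: succs_def)
  have bA: "b \<in> A" using bs succs_sub[OF k] by blast
  have ap: "a \<in> preds (sA k) b" using ab by (simp add: preds_def)
  have hb: "snd (c (k, b)) \<in> preds (sA k) b" using CC_mem[OF c k bA] by blast
  define c2 where "c2 = updH (updG c k a b2) k b a"
  have c2C: "c2 \<in> CC" unfolding c2_def
    by (rule updH_in[OF updG_in[OF c k a b2(1)] k bA ap])
  have "card (preds (sA k) b) = 1 \<longrightarrow> c = updG c2 k a b"
  proof
    assume "card (preds (sA k) b) = 1"
    then have "preds (sA k) b = {a}" using card1_single[OF preds_fin[OF k] ap] by simp
    then have "snd (c (k, b)) = a" using hb by simp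
    then show "c = updG c2 k a b"
      unfolding c2_def using restore2[of c k a b b2] fb by simp
  qed
  moreover have "snd (c2 (k, b)) = a" by (simp add: c2_def updH_def)
  ultimately have y2: "((a, c), (b, c2)) \<in> sB k"
    unfolding sB_iff using a bA c c2C ab r1 fb by (intro conjI) blast+
  have y1: "((a, c), (b, updH c k b a)) \<in> sB k" using S1[OF k a c] fb by simp
  have ne: "c2 \<noteq> updH c k b a"
  proof
    assume "c2 = updH c k b a"
    then have "fst (c2 (k, a)) = fst (updH c k b a (k, a))" by simp
    then show False using b2(2) fb unfolding c2_def updH_def updG_def
      by (cases "a = b") simp_all
  qed
  have fin: "finite {y. ((a, c), y) \<in> sB k}"
    by (rule finite_subset[where B=BB]) (use sB_sub BB_def finA CC_fin in auto)
  have "card {(b, c2), (b, updH c k b a)} \<le> card {y. ((a, c), y) \<in> sB k}"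
    using y1 y2 by (intro card_mono[OF fin]) blast
  moreover have "card {(b, c2), (b, updH c k b a)} = 2" using ne by simp
  ultimately show ?thesis by linarith
qed


lemma P1:
  assumes k: "k \<in> {1..m}" and b: "b \<in> A" and c: "c' \<in> CC"
  shows "((snd (c' (k, b)), updG c' k (snd (c' (k, b))) b), (b, c')) \<in> sB k"
proof -
  define a where "a = snd (c' (k, b))"
  have fa: "snd (c' (k, b)) = a" using a_def by simp
  have ap: "a \<in> preds (sA k) b"
    using CC_mem[OF c k b] fa by auto
  have ab: "(a, b) \<in> sA k" using ap by (simp add: preds_def)
  have aA: "a \<in> A" using ap preds_sub[OF k] by blast
  have bs: "b \<in> succs (sA k) a" using ab by (simp add: succs_def)
  have ga: "fst (c' (k, a)) \<in> succs (sA k) a" using CC_mem[OF c k aA] by blast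
  have cC: "updG c' k a b \<in> CC" using updG_in[OF c k aA bs] .
  have "card (succs (sA k) a) = 1 \<longrightarrow> c' = updH (updG c' k a b) k b a"
  proof
    assume "card (succs (sA k) a) = 1"
    then have "succs (sA k) a = {b}" using card1_single[OF succs_fin[OF k] bs] by simp
    then have "fst (c' (k, a)) = b" using ga by simp
    then show "c' = updH (updG c' k a b) k b a"
      using restore3[of c' k a b] fa by simp
  qed
  moreover have "fst (updG c' k a b (k, a)) = b" by (simp add: updG_def)
  ultimately show ?thesis
    unfolding a_def[symmetric] sB_iff using aA b c cC ab fa by (intro conjI) blast+
qed

lemma P2:
  assumes k: "k \<in> {1..m}" and b: "b \<in> A" and c: "c' \<in> CC"
    and r1: "card (preds (sA k) b) = 1" and y: "(x, (b, c')) \<in> sB k"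
  shows "x = (snd (c' (k, b)), updG c' k (snd (c' (k, b))) b)"
proof -
  obtain a c where yy: "x = (a, c)" by (cases x)
  have "((a, c), (b, c')) \<in> sB k" using y yy by simp
  then have h: "snd (c' (k, b)) = a" "card (preds (sA k) b) = 1 \<longrightarrow> c = updG c' k a b"
    unfolding sB_iff by blast+
  show ?thesis using yy h r1 by simp
qed

lemma P3:
  assumes k: "k \<in> {1..m}" and b: "b \<in> A" and c: "c' \<in> CC"
    and r1: "card (preds (sA k) b) \<noteq> 1"
  shows "card {x. (x, (b, c')) \<in> sB k} \<ge> 2"
proof -
  define a where "a = snd (c' (k, b))"
  have fa: "snd (c' (k, b)) = a" using a_def by simp
  have ap: "a \<in> preds (sA k) b"
    using CC_mem[OF c k b] fa by auto
  have "card (preds (sA k) b) \<ge> 2" using r1 preds_card[OF k b] by linarith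
  moreover have "\<not> preds (sA k) b \<subseteq> {a}"
  proof
    assume "preds (sA k) b \<subseteq> {a}"
    then have "card (preds (sA k) b) \<le> card {a}" by (intro card_mono) auto
    then show False using \<open>card (preds (sA k) b) \<ge> 2\<close> by simp
  qed
  then obtain a2 where a2: "a2 \<in> preds (sA k) b" "a2 \<noteq> a" by blast
  have ab: "(a, b) \<in> sA k" using ap by (simp add: preds_def)
  have aA: "a \<in> A" using ap preds_sub[OF k] by blast
  have bs: "b \<in> succs (sA k) a" using ab by (simp add: succs_def)
  have ga: "fst (c' (k, a)) \<in> succs (sA k) a" using CC_mem[OF c k aA] by blast
  define c2 where "c2 = updG (updH c' k b a2) k a b"
  have c2C: "c2 \<in> CC" unfolding c2_def
    by (rule updG_in[OF updH_in[OF c k b a2(1)] k aA bs])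
  have "card (succs (sA k) a) = 1 \<longrightarrow> c' = updH c2 k b a"
  proof
    assume "card (succs (sA k) a) = 1"
    then have "succs (sA k) a = {b}" using card1_single[OF succs_fin[OF k] bs] by simp
    then have "fst (c' (k, a)) = b" using ga by simp
    then show "c' = updH c2 k b a"
      unfolding c2_def using restore4[of c' k a b a2] fa by simp
  qed
  moreover have "fst (c2 (k, a)) = b" by (simp add: c2_def updG_def)
  ultimately have y2: "((a, c2), (b, c')) \<in> sB k"
    unfolding sB_iff using aA b c c2C ab r1 fa by (intro conjI) blast+
  have y1: "((a, updG c' k a b), (b, c')) \<in> sB k" using P1[OF k b c] fa by simp
  have ne: "c2 \<noteq> updG c' k a b"
  proof
    assume "c2 = updG c' k a b"
    then have "snd (c2 (k, b)) = snd (updG c' k a b (k, b))" by simp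
    then show False using a2(2) fa unfolding c2_def updH_def updG_def
      by (cases "a = b") simp_all
  qed
  have fin: "finite {x. (x, (b, c')) \<in> sB k}"
    by (rule finite_subset[where B=BB]) (use sB_sub BB_def finA CC_fin in auto)
  have "card {(a, c2), (a, updG c' k a b)} \<le> card {x. (x, (b, c')) \<in> sB k}"
    using y1 y2 by (intro card_mono[OF fin]) blast
  moreover have "card {(a, c2), (a, updG c' k a b)} = 2" using ne by simp
  ultimately show ?thesis by linarith
qed


lemma deg_succ:
  assumes k: "k \<in> {1..m}" and a: "a \<in> A" and c: "c \<in> CC"
  shows "(card {y. ((a, c), y) \<in> sB k} = 1 \<longleftrightarrow> card (succs (sA k) a) = 1) \<and>
         (2 \<le> card {y. ((a, c), y) \<in> sB k} \<longleftrightarrow> 2 \<le> card (succs (sA k) a))"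
proof (cases "card (succs (sA k) a) = 1")
  case True
  have "{y. ((a, c), y) \<in> sB k} = {(fst (c (k, a)), updH c k (fst (c (k, a))) a)}"
    using S1[OF k a c] S2[OF k a c True] by blast
  then show ?thesis using True by simp
next
  case False
  then show ?thesis using S3[OF k a c False] succs_card[OF k a] by linarith
qed

lemma deg_pred:
  assumes k: "k \<in> {1..m}" and b: "b \<in> A" and c: "c' \<in> CC"
  shows "(card {x. (x, (b, c')) \<in> sB k} = 1 \<longleftrightarrow> card (preds (sA k) b) = 1) \<and>
         (2 \<le> card {x. (x, (b, c')) \<in> sB k} \<longleftrightarrow> 2 \<le> card (preds (sA k) b))"
proof (cases "card (preds (sA k) b) = 1")
  case True
  have "{x. (x, (b, c')) \<in> sB k} = {(snd (c' (k, b)), updG c' k (snd (c' (k, b))) b)}"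
    using P1[OF k b c] P2[OF k b c True] by blast
  then show ?thesis using True by simp
next
  case False
  then show ?thesis using P3[OF k b c False] preds_card[OF k b] by linarith
qed

lemma out_eq:
  assumes k: "k \<in> {1..m}" and a: "a \<in> A" and c: "c \<in> CC"
  shows "outgoing (sB k) (a, c) \<longleftrightarrow> outgoing (sA k) a"
    and "outgoing ((sB k)\<inverse>) (a, c) \<longleftrightarrow> outgoing ((sA k)\<inverse>) a"
proof -
  have e1: "{b. (b, a) \<in> sA k} = preds (sA k) a" by (simp add: preds_def)
  have e2: "{b. (a, b) \<in> sA k} = succs (sA k) a" by (simp add: succs_def)
  show "outgoing (sB k) (a, c) \<longleftrightarrow> outgoing (sA k) a"
    unfolding outgoing_def e1 e2 using deg_succ[OF k a c] deg_pred[OF k a c] by blast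
  show "outgoing ((sB k)\<inverse>) (a, c) \<longleftrightarrow> outgoing ((sA k)\<inverse>) a"
    unfolding outgoing_def converse_iff e1 e2 using deg_succ[OF k a c] deg_pred[OF k a c] by blast
qed

lemma BB_inF: "in_F m BB sB"
  unfolding in_F_def
proof (intro conjI ballI)
  show "finite BB" unfolding BB_def using finA CC_fin by simp
  show "BB \<noteq> {}" unfolding BB_def using neA CC_ne by simp
next
  fix k assume k: "k \<in> {1..m}"
  show "sB k \<subseteq> BB \<times> BB" by (rule sB_sub)
  show "surjective_rel BB (sB k)" unfolding surjective_rel_def
  proof
    fix x assume "x \<in> BB"
    then obtain a c where x: "x = (a, c)" "a \<in> A" "c \<in> CC" unfolding BB_def by blast
    show "(\<exists>b. (x, b) \<in> sB k) \<and> (\<exists>b. (b, x) \<in> sB k)"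
      using S1[OF k x(2,3)] P1[OF k x(2,3)] x(1) by blast
  qed
next
  fix x assume "x \<in> BB"
  then obtain a c where x: "x = (a, c)" "a \<in> A" "c \<in> CC" unfolding BB_def by blast
  have "{(i, b). i \<in> {1..m} \<and> outgoing (if b then sB i else (sB i)\<inverse>) x} =
        {(i, b). i \<in> {1..m} \<and> outgoing (if b then sA i else (sA i)\<inverse>) a}"
    using out_eq[OF _ x(2,3)] x(1) by auto
  moreover have "card {(i, b). i \<in> {1..m} \<and> outgoing (if b then sA i else (sA i)\<inverse>) a} = 1"
    using inF x(2) unfolding in_F_def by blast
  ultimately show "card {(i, b). i \<in> {1..m} \<and> outgoing (if b then sB i else (sB i)\<inverse>) x} = 1"
    by simp
next
  fix k assume k: "k \<in> {1..m}"
  show "\<forall>x y. (x, y) \<in> sB k \<longrightarrow> outgoing (sB k) x \<or> outgoing ((sB k)\<inverse>) y"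
  proof (intro allI impI)
    fix x y assume xy: "(x, y) \<in> sB k"
    obtain a c b c' where e: "x = (a, c)" "y = (b, c')" by (cases x, cases y) auto
    have h: "a \<in> A" "b \<in> A" "c \<in> CC" "c' \<in> CC" "(a, b) \<in> sA k"
      using xy unfolding e sB_iff by blast+
    have "outgoing (sA k) a \<or> outgoing ((sA k)\<inverse>) b"
      using inF k h(5) unfolding in_F_def by blast
    then show "outgoing (sB k) x \<or> outgoing ((sB k)\<inverse>) y"
      using out_eq[OF k h(1,3)] out_eq[OF k h(2,4)] e by simp
  qed
qed

lemma fine_succ: "((a, c), y) \<in> sB k \<Longrightarrow> fst y = fst (c (k, a))"
  by (cases y) (simp add: sB_iff)
lemma fine_pred: "(x, (b, c')) \<in> sB k \<Longrightarrow> fst x = snd (c' (k, b))"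
  by (cases x) (simp add: sB_iff)

lemma proj_univ: "fst ` BB = A"
  unfolding BB_def using CC_ne by auto

lemma proj_rel: assumes k: "k \<in> {1..m}" shows "(\<lambda>(x, y). (fst x, fst y)) ` sB k = sA k"
proof
  show "(\<lambda>(x, y). (fst x, fst y)) ` sB k \<subseteq> sA k"
    by (auto simp: sB_def)
  show "sA k \<subseteq> (\<lambda>(x, y). (fst x, fst y)) ` sB k"
  proof
    fix e assume e: "e \<in> sA k"
    then obtain a b where ab: "e = (a, b)" "(a, b) \<in> sA k" by (cases e) auto
    have aA: "a \<in> A" and bA: "b \<in> A" using subA[OF k] ab by auto
    have bs: "b \<in> succs (sA k) a" and ap: "a \<in> preds (sA k) b" using ab by (auto simp: succs_def preds_def)
    obtain c0 where c0: "c0 \<in> CC" using CC_ne by blast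
    define c where "c = updH (updG c0 k a b) k b a"
    have cC: "c \<in> CC" unfolding c_def by (rule updH_in[OF updG_in[OF c0 k aA bs] k bA ap])
    have f: "fst (c (k, a)) = b" unfolding c_def updH_def updG_def by (cases "a = b") simp_all
    have "((a, c), (fst (c (k, a)), updH c k (fst (c (k, a))) a)) \<in> sB k" by (rule S1[OF k aA cC])
    then show "e \<in> (\<lambda>(x, y). (fst x, fst y)) ` sB k"
      using ab f by force
  qed
qed

end
lemma refinement:
  assumes F: "in_F m (A :: 'a set) sA"
  shows "\<exists>(B :: ('a \<times> (nat \<times> 'a \<Rightarrow> 'a \<times> 'a)) set) sB \<pi>. in_F m B sB \<and> \<pi> ` B = A \<and>
     (\<forall>k\<in>{1..m}. (\<lambda>(x, y). (\<pi> x, \<pi> y)) ` sB k = sA k) \<and>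
     (\<forall>k\<in>{1..m}. \<forall>x y y'. (x, y) \<in> sB k \<longrightarrow> (x, y') \<in> sB k \<longrightarrow> \<pi> y = \<pi> y') \<and>
     (\<forall>k\<in>{1..m}. \<forall>x x' y. (x, y) \<in> sB k \<longrightarrow> (x', y) \<in> sB k \<longrightarrow> \<pi> x = \<pi> x')"
proof -
  interpret R: refine m A sA by (rule refine.intro) (rule F)
  have f1: "\<forall>k\<in>{1..m}. \<forall>x y y'. (x, y) \<in> R.sB k \<longrightarrow> (x, y') \<in> R.sB k \<longrightarrow> fst y = fst y'"
  proof (intro ballI allI impI)
    fix k x y y' assume "(x, y) \<in> R.sB k" "(x, y') \<in> R.sB k"
    then show "fst y = fst y'" using R.fine_succ by (cases x) metis
  qed
  have f2: "\<forall>k\<in>{1..m}. \<forall>x x' y. (x, y) \<in> R.sB k \<longrightarrow> (x', y) \<in> R.sB k \<longrightarrow> fst x = fst x'"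
  proof (intro ballI allI impI)
    fix k x x' y assume "(x, y) \<in> R.sB k" "(x', y) \<in> R.sB k"
    then show "fst x = fst x'" using R.fine_pred by (cases y) metis
  qed
  have f3: "\<forall>k\<in>{1..m}. (\<lambda>(x, y). (fst x, fst y)) ` R.sB k = sA k" using R.proj_rel by blast
  show ?thesis
    apply (rule exI[of _ R.BB])
    apply (rule exI[of _ R.sB])
    apply (rule exI[of _ fst])
    using R.BB_inF R.proj_univ f3 f1 f2 by blast
qed




lemma graph_homeo:
  assumes H: "Hausdorff_space T" and C: "compact_space T"
    and S: "closedin (prod_topology T T) S"
    and u1: "\<forall>x\<in>topspace T. \<exists>!y. (x, y) \<in> S"
    and u2: "\<forall>y\<in>topspace T. \<exists>!x. (x, y) \<in> S"
  shows "\<exists>h. homeomorphic_map T T h \<and> S = {(x, h x) | x. x \<in> topspace T}"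
proof -
  have Ssub: "S \<subseteq> topspace T \<times> topspace T"
    using closedin_subset[OF S] by simp
  define h where "h x = (THE y. (x, y) \<in> S)" for x
  define g where "g y = (THE x. (x, y) \<in> S)" for y
  have hS: "(x, h x) \<in> S" if "x \<in> topspace T" for x
    unfolding h_def using u1 that by (metis theI')
  have gS: "(g y, y) \<in> S" if "y \<in> topspace T" for y
    unfolding g_def using u2 that by (metis theI')
  have hU: "h x = y" if "(x, y) \<in> S" for x y
    using u1 that Ssub hS by blast
  have gU: "g y = x" if "(x, y) \<in> S" for x y
    using u2 that Ssub gS by blast
  have CP: "compact_space (prod_topology T T)"
    using C by (simp add: compact_space_prod_topology)
  have closed_img: "closedin T (f ` (S \<inter> Z))" if "closedin (prod_topology T T) Z"
    and "continuous_map (prod_topology T T) T f" for Z f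
  proof -
    have "closedin (prod_topology T T) (S \<inter> Z)" using S that(1) by (rule closedin_Int)
    then have "compactin (prod_topology T T) (S \<inter> Z)" using CP closedin_compact_space by blast
    then have "compactin T (f ` (S \<inter> Z))" using image_compactin that(2) by blast
    then show ?thesis using compactin_imp_closedin H by blast
  qed
  have ch: "continuous_map T T h"
    unfolding continuous_map_closedin
  proof (intro conjI allI impI)
    show "h \<in> topspace T \<rightarrow> topspace T" using hS Ssub by blast
    fix K assume K: "closedin T K"
    have "closedin (prod_topology T T) (topspace T \<times> K)"
      using K by (simp add: closedin_prod_Times_iff)
    then have "closedin T (fst ` (S \<inter> (topspace T \<times> K)))"
      by (rule closed_img) (rule continuous_map_fst)
    moreover have "fst ` (S \<inter> (topspace T \<times> K)) = {x \<in> topspace T. h x \<in> K}"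
    proof
      show "fst ` (S \<inter> (topspace T \<times> K)) \<subseteq> {x \<in> topspace T. h x \<in> K}"
        using hU Ssub by force
      show "{x \<in> topspace T. h x \<in> K} \<subseteq> fst ` (S \<inter> (topspace T \<times> K))"
        using hS by force
    qed
    ultimately show "closedin T {x \<in> topspace T. h x \<in> K}" by simp
  qed
  have cg: "continuous_map T T g"
    unfolding continuous_map_closedin
  proof (intro conjI allI impI)
    show "g \<in> topspace T \<rightarrow> topspace T" using gS Ssub by blast
    fix K assume K: "closedin T K"
    have "closedin (prod_topology T T) (K \<times> topspace T)"
      using K by (simp add: closedin_prod_Times_iff)
    then have "closedin T (snd ` (S \<inter> (K \<times> topspace T)))"
      by (rule closed_img) (rule continuous_map_snd)
    moreover have "snd ` (S \<inter> (K \<times> topspace T)) = {x \<in> topspace T. g x \<in> K}"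
    proof
      show "snd ` (S \<inter> (K \<times> topspace T)) \<subseteq> {x \<in> topspace T. g x \<in> K}"
        using gU Ssub by force
      show "{x \<in> topspace T. g x \<in> K} \<subseteq> snd ` (S \<inter> (K \<times> topspace T))"
        using gS by force
    qed
    ultimately show "closedin T {x \<in> topspace T. g x \<in> K}" by simp
  qed
  have "homeomorphic_maps T T h g"
    unfolding homeomorphic_maps_def using ch cg hS gS hU gU by blast
  then have "homeomorphic_map T T h" using homeomorphic_map_maps by blast
  moreover have "S = {(x, h x) | x. x \<in> topspace T}"
    using hS hU Ssub by fastforce
  ultimately show ?thesis by blast
qed

lemma out_img:
  assumes r: "r \<subseteq> B \<times> B" and inj: "inj_on f B" and x: "x \<in> B"
  shows "outgoing ((\<lambda>(u, v). (f u, f v)) ` r) (f x) \<longleftrightarrow> outgoing r x"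
proof -
  have e1: "{b. (b, f x) \<in> (\<lambda>(u, v). (f u, f v)) ` r} = f ` {b. (b, x) \<in> r}"
  proof
    show "{b. (b, f x) \<in> (\<lambda>(u, v). (f u, f v)) ` r} \<subseteq> f ` {b. (b, x) \<in> r}"
    proof
      fix b assume "b \<in> {b. (b, f x) \<in> (\<lambda>(u, v). (f u, f v)) ` r}"
      then obtain u v where uv: "(u, v) \<in> r" "b = f u" "f x = f v" by auto
      have "v = x" using inj x r uv unfolding inj_on_def by blast
      then show "b \<in> f ` {b. (b, x) \<in> r}" using uv by auto
    qed
    show "f ` {b. (b, x) \<in> r} \<subseteq> {b. (b, f x) \<in> (\<lambda>(u, v). (f u, f v)) ` r}" by force
  qed
  have e2: "{b. (f x, b) \<in> (\<lambda>(u, v). (f u, f v)) ` r} = f ` {b. (x, b) \<in> r}"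
  proof
    show "{b. (f x, b) \<in> (\<lambda>(u, v). (f u, f v)) ` r} \<subseteq> f ` {b. (x, b) \<in> r}"
    proof
      fix b assume "b \<in> {b. (f x, b) \<in> (\<lambda>(u, v). (f u, f v)) ` r}"
      then obtain u v where uv: "(u, v) \<in> r" "b = f v" "f x = f u" by auto
      have "u = x" using inj x r uv unfolding inj_on_def by blast
      then show "b \<in> f ` {b. (x, b) \<in> r}" using uv by auto
    qed
    show "f ` {b. (x, b) \<in> r} \<subseteq> {b. (f x, b) \<in> (\<lambda>(u, v). (f u, f v)) ` r}" by force
  qed
  have i1: "inj_on f {b. (b, x) \<in> r}" using r by (intro inj_on_subset[OF inj]) blast
  have i2: "inj_on f {b. (x, b) \<in> r}" using r by (intro inj_on_subset[OF inj]) blast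
  show ?thesis unfolding outgoing_def e1 e2 card_image[OF i1] card_image[OF i2] ..
qed

lemma conv_img: "((\<lambda>(u, v). (f u, f v)) ` r)\<inverse> = (\<lambda>(u, v). (f u, f v)) ` (r\<inverse>)"
  by auto

lemma inF_img:
  assumes F: "in_F m B sB" and inj: "inj_on f B"
  shows "in_F m (f ` B) (\<lambda>k. (\<lambda>(u, v). (f u, f v)) ` sB k)"
  unfolding in_F_def
proof (intro conjI ballI)
  show "finite (f ` B)" using F by (simp add: in_F_def)
  show "f ` B \<noteq> {}" using F by (simp add: in_F_def)
next
  fix k assume k: "k \<in> {1..m}"
  have sub: "sB k \<subseteq> B \<times> B" and sj: "surjective_rel B (sB k)" using F k by (auto simp: in_F_def)
  show "(\<lambda>(u, v). (f u, f v)) ` sB k \<subseteq> f ` B \<times> f ` B" using sub by auto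
  show "surjective_rel (f ` B) ((\<lambda>(u, v). (f u, f v)) ` sB k)"
    unfolding surjective_rel_def
  proof
    fix y assume "y \<in> f ` B"
    then obtain x where x: "x \<in> B" "y = f x" by blast
    obtain b c where "(x, b) \<in> sB k" "(c, x) \<in> sB k" using sj x(1) unfolding surjective_rel_def by blast
    then show "(\<exists>b. (y, b) \<in> (\<lambda>(u, v). (f u, f v)) ` sB k) \<and> (\<exists>c. (c, y) \<in> (\<lambda>(u, v). (f u, f v)) ` sB k)"
      using x(2) by force
  qed
  show "\<forall>a b. (a, b) \<in> (\<lambda>(u, v). (f u, f v)) ` sB k \<longrightarrow>
      outgoing ((\<lambda>(u, v). (f u, f v)) ` sB k) a \<or> outgoing (((\<lambda>(u, v). (f u, f v)) ` sB k)\<inverse>) b"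
  proof (intro allI impI)
    fix a b assume "(a, b) \<in> (\<lambda>(u, v). (f u, f v)) ` sB k"
    then obtain u v where uv: "(u, v) \<in> sB k" "a = f u" "b = f v" by auto
    have uB: "u \<in> B" and vB: "v \<in> B" using uv sub by auto
    have "outgoing (sB k) u \<or> outgoing ((sB k)\<inverse>) v" using F k uv(1) by (auto simp: in_F_def)
    moreover have "(sB k)\<inverse> \<subseteq> B \<times> B" using sub by auto
    ultimately show "outgoing ((\<lambda>(u, v). (f u, f v)) ` sB k) a \<or> outgoing (((\<lambda>(u, v). (f u, f v)) ` sB k)\<inverse>) b"
      unfolding conv_img uv(2,3) using out_img[OF sub inj uB] out_img[OF _ inj vB, of "(sB k)\<inverse>"] by blast
  qed
next
  fix y assume "y \<in> f ` B"
  then obtain x where x: "x \<in> B" "y = f x" by blast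
  have "{(i, b). i \<in> {1..m} \<and> outgoing (if b then (\<lambda>(u, v). (f u, f v)) ` sB i else ((\<lambda>(u, v). (f u, f v)) ` sB i)\<inverse>) y}
      = {(i, b). i \<in> {1..m} \<and> outgoing (if b then sB i else (sB i)\<inverse>) x}"
  proof (intro Collect_cong, clarify)
    fix i b
    show "(i \<in> {1..m} \<and> outgoing (if b then (\<lambda>(u, v). (f u, f v)) ` sB i else ((\<lambda>(u, v). (f u, f v)) ` sB i)\<inverse>) y) =
          (i \<in> {1..m} \<and> outgoing (if b then sB i else (sB i)\<inverse>) x)"
    proof (cases "i \<in> {1..m}")
      case True
      have sub: "sB i \<subseteq> B \<times> B" using F True by (auto simp: in_F_def)
      then have sub': "(sB i)\<inverse> \<subseteq> B \<times> B" by auto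
      show ?thesis using True out_img[OF sub inj x(1)] out_img[OF sub' inj x(1)] x(2)
        unfolding conv_img by simp
    next
      case False
      then show ?thesis by blast
    qed
  qed
  moreover have "card {(i, b). i \<in> {1..m} \<and> outgoing (if b then sB i else (sB i)\<inverse>) x} = 1"
    using F x(1) by (simp add: in_F_def)
  ultimately show "card {(i, b). i \<in> {1..m} \<and> outgoing (if b then (\<lambda>(u, v). (f u, f v)) ` sB i else ((\<lambda>(u, v). (f u, f v)) ` sB i)\<inverse>) y} = 1"
    by simp
qed

lemma ext_univ_map: "map_sum \<pi> id ` ext_univ n B = ext_univ n (\<pi> ` B)"
  unfolding ext_univ_def by (auto simp: image_Un image_image)

lemma ext_rel_map:
  "(\<lambda>(u, v). (map_sum \<pi> id u, map_sum \<pi> id v)) ` ext_rel n sB k =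
   ext_rel n (\<lambda>k. (\<lambda>(x, y). (\<pi> x, \<pi> y)) ` sB k) k"
proof -
  have 1: "(\<lambda>(u, v). (map_sum \<pi> id u, map_sum \<pi> id v)) ` ((\<lambda>(x, y). (Inl x, Inl y)) ` sB k)
      = (\<lambda>(x, y). (Inl x, Inl y)) ` ((\<lambda>(x, y). (\<pi> x, \<pi> y)) ` sB k)"
    by (simp add: image_image case_prod_beta)
  have 2: "(\<lambda>(u, v). (map_sum \<pi> id u, map_sum \<pi> id v)) ` {(Inr j, Inr j) | j. j \<in> {1..n}}
      = {(Inr j, Inr j) | j. j \<in> {1..n}}"
    by force
  show ?thesis unfolding ext_rel_def image_Un 1 2 ..
qed

lemma img_pair_comp: "(\<lambda>(x, y). ((f \<circ> g) x, (f \<circ> g) y)) ` S = (\<lambda>(u, v). (f u, f v)) ` ((\<lambda>(x, y). (g x, g y)) ` S)"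
  by (simp add: image_image case_prod_beta)

lemma epi_comp:
  assumes E: "epimorphism m n T s p (ext_univ n B) (ext_rel n sB) ext_const chi"
    and U: "\<pi> ` B = A" and R: "\<forall>k\<in>{1..m}. (\<lambda>(x, y). (\<pi> x, \<pi> y)) ` sB k = sA k"
  shows "epimorphism m n T s p (ext_univ n A) (ext_rel n sA) ext_const (map_sum \<pi> id \<circ> chi)"
  unfolding epimorphism_def
proof (intro conjI ballI)
  have c1: "continuous_map T (discrete_topology (ext_univ n B)) chi" using E by (simp add: epimorphism_def)
  have "continuous_map (discrete_topology (ext_univ n B)) (discrete_topology (ext_univ n A)) (map_sum \<pi> id)"
    using ext_univ_map[of \<pi> n B] U by auto
  then show "continuous_map T (discrete_topology (ext_univ n A)) (map_sum \<pi> id \<circ> chi)"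
    using c1 continuous_map_compose by blast
  have "chi ` topspace T = ext_univ n B" using E by (simp add: epimorphism_def)
  then show "(map_sum \<pi> id \<circ> chi) ` topspace T = ext_univ n A"
    using ext_univ_map[of \<pi> n B] U image_comp[of "map_sum \<pi> id" chi "topspace T", symmetric] by simp
next
  fix k assume k: "k \<in> {1..m}"
  have "(\<lambda>(x, y). (chi x, chi y)) ` s k = ext_rel n sB k" using E k by (simp add: epimorphism_def)
  then have "(\<lambda>(x, y). ((map_sum \<pi> id \<circ> chi) x, (map_sum \<pi> id \<circ> chi) y)) ` s k =
     (\<lambda>(u, v). (map_sum \<pi> id u, map_sum \<pi> id v)) ` ext_rel n sB k"
    by (simp only: img_pair_comp)
  also have "\<dots> = ext_rel n (\<lambda>k. (\<lambda>(x, y). (\<pi> x, \<pi> y)) ` sB k) k" by (rule ext_rel_map)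
  also have "\<dots> = ext_rel n sA k" using R k by (simp add: ext_rel_def)
  finally show "(\<lambda>(x, y). ((map_sum \<pi> id \<circ> chi) x, (map_sum \<pi> id \<circ> chi) y)) ` s k = ext_rel n sA k" .
next
  fix j assume j: "j \<in> {1..n}"
  then show "(map_sum \<pi> id \<circ> chi) (p j) = ext_const j" using E by (simp add: epimorphism_def ext_const_def)
qed

lemma epi_aut:
  assumes E: "epimorphism m n T s p B sB pB \<phi>" and Al: "automorphism m n T s p \<alpha>"
  shows "epimorphism m n T s p B sB pB (\<phi> \<circ> \<alpha>)"
  unfolding epimorphism_def
proof (intro conjI ballI)
  have h: "homeomorphic_map T T \<alpha>" using Al by (simp add: automorphism_def)
  show "continuous_map T (discrete_topology B) (\<phi> \<circ> \<alpha>)"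
    using E homeomorphic_imp_continuous_map[OF h] continuous_map_compose
    unfolding epimorphism_def by blast
  show "(\<phi> \<circ> \<alpha>) ` topspace T = B"
    using E homeomorphic_imp_surjective_map[OF h] image_comp[of \<phi> \<alpha> "topspace T", symmetric]
    unfolding epimorphism_def by simp
next
  fix k assume k: "k \<in> {1..m}"
  have "(\<lambda>(x, y). (\<alpha> x, \<alpha> y)) ` s k = s k" using Al k by (simp add: automorphism_def)
  then have "(\<lambda>(x, y). ((\<phi> \<circ> \<alpha>) x, (\<phi> \<circ> \<alpha>) y)) ` s k = (\<lambda>(x, y). (\<phi> x, \<phi> y)) ` s k"
    by (simp only: img_pair_comp)
  then show "(\<lambda>(x, y). ((\<phi> \<circ> \<alpha>) x, (\<phi> \<circ> \<alpha>) y)) ` s k = sB k"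
    using E k by (simp add: epimorphism_def)
next
  fix j assume "j \<in> {1..n}"
  then show "(\<phi> \<circ> \<alpha>) (p j) = pB j" using E Al by (simp add: epimorphism_def automorphism_def)
qed


lemma PL1:
  assumes "proj_fraisse_limit m n T s p" "in_F m (A :: nat set) sA"
  shows "\<exists>phi. epimorphism m n T s p (ext_univ n A) (ext_rel n sA) ext_const phi"
proof -
  have "\<forall>(A :: nat set) sA. in_F m A sA \<longrightarrow>
        (\<exists>\<phi>. epimorphism m n T s p (ext_univ n A) (ext_rel n sA) ext_const \<phi>)"
    using assms(1) unfolding proj_fraisse_limit_def by (rule conjunct1[OF conjunct2])
  then show ?thesis using assms(2) by blast
qed

lemma PL2:
  assumes "proj_fraisse_limit m n T s p" "finite (X :: nat set)" "continuous_map T (discrete_topology X) f"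
  shows "\<exists>(A :: nat set) sA \<psi> g. in_F m A sA \<and>
            epimorphism m n T s p (ext_univ n A) (ext_rel n sA) ext_const \<psi> \<and>
            (\<forall>x\<in>topspace T. f x = g (\<psi> x))"
proof -
  have "\<forall>(X :: nat set) f. finite X \<and> continuous_map T (discrete_topology X) f \<longrightarrow>
        (\<exists>(A :: nat set) sA \<psi> g. in_F m A sA \<and>
            epimorphism m n T s p (ext_univ n A) (ext_rel n sA) ext_const \<psi> \<and>
            (\<forall>x\<in>topspace T. f x = g (\<psi> x)))"
    using assms(1) unfolding proj_fraisse_limit_def by (rule conjunct1[OF conjunct2[OF conjunct2]])
  then show ?thesis using assms(2,3) by blast
qed

lemma PL3:
  assumes "proj_fraisse_limit m n T s p" "in_F m (A :: nat set) sA"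
    "epimorphism m n T s p (ext_univ n A) (ext_rel n sA) ext_const \<phi>1"
    "epimorphism m n T s p (ext_univ n A) (ext_rel n sA) ext_const \<phi>2"
  shows "\<exists>\<alpha>. automorphism m n T s p \<alpha> \<and> (\<forall>x\<in>topspace T. \<phi>1 x = \<phi>2 (\<alpha> x))"
proof -
  have "\<forall>(A :: nat set) sA \<phi>1 \<phi>2. in_F m A sA \<and>
        epimorphism m n T s p (ext_univ n A) (ext_rel n sA) ext_const \<phi>1 \<and>
        epimorphism m n T s p (ext_univ n A) (ext_rel n sA) ext_const \<phi>2 \<longrightarrow>
        (\<exists>\<alpha>. automorphism m n T s p \<alpha> \<and> (\<forall>x\<in>topspace T. \<phi>1 x = \<phi>2 (\<alpha> x)))"
    using assms(1) unfolding proj_fraisse_limit_def by (rule conjunct2[OF conjunct2[OF conjunct2]])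
  then show ?thesis using assms(2,3,4) by blast
qed

lemma PTS: "proj_fraisse_limit m n T s p \<Longrightarrow> top_structure m n T s p"
  unfolding proj_fraisse_limit_def by (rule conjunct1)

lemma L1gen:
  fixes B :: "'b set"
  assumes P: "proj_fraisse_limit m n T s p" and F: "in_F m B sB"
  shows "\<exists>chi. epimorphism m n T s p (ext_univ n B) (ext_rel n sB) ext_const chi"
proof -
  have finB: "finite B" using F by (simp add: in_F_def)
  obtain f where bij: "bij_betw f B {0..<card B}" using ex_bij_betw_finite_nat[OF finB] by blast
  have inj: "inj_on f B" using bij bij_betw_imp_inj_on by blast
  define A where "A = f ` B"
  define sA where "sA k = (\<lambda>(u, v). (f u, f v)) ` sB k" for k
  have FA: "in_F m A sA" unfolding A_def sA_def by (rule inF_img[OF F inj])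
  obtain phi where E: "epimorphism m n T s p (ext_univ n A) (ext_rel n sA) ext_const phi"
    using PL1[OF P FA] by blast
  define g where "g = inv_into B f"
  have gf: "g (f x) = x" if "x \<in> B" for x unfolding g_def using inv_into_f_f[OF inj that] .
  have U: "g ` A = B" unfolding A_def image_image using gf by (simp cong: image_cong)
  have R: "\<forall>k\<in>{1..m}. (\<lambda>(x, y). (g x, g y)) ` sA k = sB k"
  proof
    fix k assume k: "k \<in> {1..m}"
    have sub: "sB k \<subseteq> B \<times> B" using F k by (simp add: in_F_def)
    have "(\<lambda>(x, y). (g x, g y)) ` sA k = (\<lambda>(x, y). (g (f x), g (f y))) ` sB k"
      unfolding sA_def by (simp add: image_image case_prod_beta)
    also have "\<dots> = (\<lambda>z. z) ` sB k"
      using sub gf by (intro image_cong) auto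
    finally show "(\<lambda>(x, y). (g x, g y)) ` sA k = sB k" by simp
  qed
  show ?thesis using epi_comp[OF E U R] by blast
qed

lemma sep:
  assumes TS: "top_structure m n T s p" and x: "x \<in> topspace T" and K: "closedin T K" and xK: "x \<notin> K"
  shows "\<exists>V. openin T V \<and> closedin T V \<and> x \<in> V \<and> V \<inter> K = {}"
proof -
  have Z: "zero_dimensional T" using TS by (simp add: top_structure_def)
  have "openin T (topspace T - K)" using K by (simp add: openin_diff)
  then obtain V where "openin T V" "closedin T V" "x \<in> V" "V \<subseteq> topspace T - K"
    using Z x xK unfolding zero_dimensional_def by blast
  then show ?thesis by blast
qed

lemma indic_cont:
  assumes "openin T V" "closedin T V"
  shows "continuous_map T (discrete_topology {0, 1::nat}) (\<lambda>x. if x \<in> V then 1 else 0)"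
  unfolding continuous_map_def
proof (intro conjI allI impI)
  show "(\<lambda>x. if x \<in> V then 1 else 0) \<in> topspace T \<rightarrow> topspace (discrete_topology {0, 1::nat})" by auto
  fix U :: "nat set"
  have o1: "openin T (topspace T - V)" using assms(2) by (simp add: closedin_def)
  have Vs: "V \<subseteq> topspace T" using assms(1) by (rule openin_subset)
  show "openin T {x \<in> topspace T. (if x \<in> V then 1 else 0) \<in> U}"
  proof (cases "(1::nat) \<in> U"; cases "(0::nat) \<in> U")
    assume "1 \<in> U" "0 \<in> U"
    then have "{x \<in> topspace T. (if x \<in> V then 1 else 0) \<in> U} = topspace T" by simp
    then show ?thesis by (metis openin_topspace)
  next
    assume "1 \<in> U" "0 \<notin> U"
    then have "{x \<in> topspace T. (if x \<in> V then 1 else 0) \<in> U} = V" using Vs by auto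
    then show ?thesis using assms(1) by metis
  next
    assume "1 \<notin> U" "0 \<in> U"
    then have "{x \<in> topspace T. (if x \<in> V then 1 else 0) \<in> U} = topspace T - V" by auto
    then show ?thesis using o1 by metis
  next
    assume "1 \<notin> U" "0 \<notin> U"
    then have "{x \<in> topspace T. (if x \<in> V then 1 else 0) \<in> U} = {}" by auto
    then show ?thesis by (metis openin_empty)
  qed
qed

lemma L2sep:
  assumes P: "proj_fraisse_limit m n T s p" and V: "openin T V" "closedin T V"
  shows "\<exists>(A :: nat set) sA psi. in_F m A sA \<and>
     epimorphism m n T s p (ext_univ n A) (ext_rel n sA) ext_const psi \<and>
     (\<forall>x\<in>topspace T. \<forall>y\<in>topspace T. psi x = psi y \<longrightarrow> (x \<in> V \<longleftrightarrow> y \<in> V))"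
proof -
  define f where "f x = (if x \<in> V then 1 else (0::nat))" for x
  have fin: "finite {0, 1::nat}" by simp
  have cont: "continuous_map T (discrete_topology {0, 1::nat}) f"
    unfolding f_def by (rule indic_cont[OF V])
  obtain A :: "nat set" and sA psi g where h1: "in_F m A sA"
    and h2: "epimorphism m n T s p (ext_univ n A) (ext_rel n sA) ext_const psi"
    and h3: "\<forall>x\<in>topspace T. f x = g (psi x)"
    using PL2[OF P fin cont] by blast
  have h4: "\<forall>x\<in>topspace T. \<forall>y\<in>topspace T. psi x = psi y \<longrightarrow> (x \<in> V \<longleftrightarrow> y \<in> V)"
  proof (intro ballI impI)
    fix x y assume xy: "x \<in> topspace T" "y \<in> topspace T" "psi x = psi y"
    have "f x = f y" using h3 xy by metis
    then show "x \<in> V \<longleftrightarrow> y \<in> V" unfolding f_def by (cases "x \<in> V"; cases "y \<in> V") simp_all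
  qed
  show ?thesis using h1 h2 h4 by blast
qed

lemma edge_exists:
  assumes F: "in_F m A sA" and i: "i \<in> {1..m}" and z: "z \<in> ext_univ n A"
  shows "(\<exists>w. (z, w) \<in> ext_rel n sA i) \<and> (\<exists>w. (w, z) \<in> ext_rel n sA i)"
proof -
  have sj: "surjective_rel A (sA i)" using F i by (simp add: in_F_def)
  from z consider (l) a where "a \<in> A" "z = Inl a" | (r) j where "j \<in> {1..n}" "z = Inr j"
    unfolding ext_univ_def by blast
  then show ?thesis
  proof cases
    case l
    then obtain b c where "(a, b) \<in> sA i" "(c, a) \<in> sA i" using sj unfolding surjective_rel_def by blast
    then show ?thesis using l unfolding ext_rel_def by force
  next
    case r
    then show ?thesis unfolding ext_rel_def by blast
  qed
qed

lemma epi_in: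
  assumes E: "epimorphism m n T s p U R pc psi" and x: "x \<in> topspace T"
  shows "psi x \<in> U"
  using E x unfolding epimorphism_def by blast

lemma epi_edge:
  assumes E: "epimorphism m n T s p U R pc psi" and i: "i \<in> {1..m}" and xy: "(x, y) \<in> s i"
  shows "(psi x, psi y) \<in> R i"
proof -
  have "(\<lambda>(x, y). (psi x, psi y)) ` s i = R i" using E i by (simp add: epimorphism_def)
  then show ?thesis using xy by force
qed

lemma epi_edge_back:
  assumes E: "epimorphism m n T s p U R pc psi" and i: "i \<in> {1..m}" and e: "(u, v) \<in> R i"
  shows "\<exists>x y. (x, y) \<in> s i \<and> psi x = u \<and> psi y = v"
proof -
  have "(\<lambda>(x, y). (psi x, psi y)) ` s i = R i" using E i by (simp add: epimorphism_def)
  then show ?thesis using e by force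
qed




lemma ext_rel_Inl: "(Inl u, w) \<in> ext_rel n sB i \<longleftrightarrow> (\<exists>v. w = Inl v \<and> (u, v) \<in> sB i)"
  unfolding ext_rel_def by force
lemma ext_rel_Inl2: "(w, Inl u) \<in> ext_rel n sB i \<longleftrightarrow> (\<exists>v. w = Inl v \<and> (v, u) \<in> sB i)"
  unfolding ext_rel_def by force
lemma ext_rel_Inr: "(Inr j, w) \<in> ext_rel n sB i \<Longrightarrow> w = Inr j"
  unfolding ext_rel_def by force
lemma ext_rel_Inr2: "(w, Inr j) \<in> ext_rel n sB i \<Longrightarrow> w = Inr j"
  unfolding ext_rel_def by force




lemma fine_ext:
  assumes fine: "\<forall>x y y'. (x, y) \<in> sB i \<longrightarrow> (x, y') \<in> sB i \<longrightarrow> \<pi> y = \<pi> y'"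
    and e1: "(z, w1) \<in> ext_rel n sB i" and e2: "(z, w2) \<in> ext_rel n sB i"
  shows "map_sum \<pi> id w1 = map_sum \<pi> id w2"
proof (cases z)
  case (Inl u)
  obtain v1 where v1: "w1 = Inl v1" "(u, v1) \<in> sB i" using e1 unfolding Inl ext_rel_Inl by blast
  obtain v2 where v2: "w2 = Inl v2" "(u, v2) \<in> sB i" using e2 unfolding Inl ext_rel_Inl by blast
  have "\<pi> v1 = \<pi> v2" using fine v1(2) v2(2) by blast
  then show ?thesis using v1(1) v2(1) by simp
next
  case (Inr j)
  have "w1 = Inr j" using e1 unfolding Inr by (rule ext_rel_Inr)
  moreover have "w2 = Inr j" using e2 unfolding Inr by (rule ext_rel_Inr)
  ultimately show ?thesis by simp
qed

lemma fine_ext_pred: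
  assumes fine: "\<forall>x x' y. (x, y) \<in> sB i \<longrightarrow> (x', y) \<in> sB i \<longrightarrow> \<pi> x = \<pi> x'"
    and e1: "(w1, z) \<in> ext_rel n sB i" and e2: "(w2, z) \<in> ext_rel n sB i"
  shows "map_sum \<pi> id w1 = map_sum \<pi> id w2"
proof (cases z)
  case (Inl u)
  obtain v1 where v1: "w1 = Inl v1" "(v1, u) \<in> sB i" using e1 unfolding Inl ext_rel_Inl2 by blast
  obtain v2 where v2: "w2 = Inl v2" "(v2, u) \<in> sB i" using e2 unfolding Inl ext_rel_Inl2 by blast
  have "\<pi> v1 = \<pi> v2" using fine v1(2) v2(2) by blast
  then show ?thesis using v1(1) v2(1) by simp
next
  case (Inr j)
  have "w1 = Inr j" using e1 unfolding Inr by (rule ext_rel_Inr2)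
  moreover have "w2 = Inr j" using e2 unfolding Inr by (rule ext_rel_Inr2)
  ultimately show ?thesis by simp
qed

lemma aut_edge:
  assumes "automorphism m n T s p \<alpha>" "i \<in> {1..m}" "(x, y) \<in> s i"
  shows "(\<alpha> x, \<alpha> y) \<in> s i"
proof -
  have "(\<lambda>(x, y). (\<alpha> x, \<alpha> y)) ` s i = s i" using assms(1,2) by (simp add: automorphism_def)
  then show ?thesis using assms(3) by force
qed

lemma uniq_aux:
  assumes P: "proj_fraisse_limit m n T s p" and i: "i \<in> {1..m}"
    and TS: "top_structure m n T s p"
    and y1: "y1 \<in> topspace T" and y2: "y2 \<in> topspace T" and ne: "y1 \<noteq> y2"
  obtains psi and B :: "(nat \<times> (nat \<times> nat \<Rightarrow> nat \<times> nat)) set" and sB and \<pi> :: "nat \<times> (nat \<times> nat \<Rightarrow> nat \<times> nat) \<Rightarrow> nat" and chi and \<alpha>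
  where "psi y1 \<noteq> psi y2" "automorphism m n T s p \<alpha>"
    "\<forall>x\<in>topspace T. psi x = (map_sum \<pi> id \<circ> chi) (\<alpha> x)"
    "epimorphism m n T s p (ext_univ n B) (ext_rel n sB) ext_const chi"
    "\<forall>x y y'. (x, y) \<in> sB i \<longrightarrow> (x, y') \<in> sB i \<longrightarrow> \<pi> y = \<pi> y'"
    "\<forall>x x' y. (x, y) \<in> sB i \<longrightarrow> (x', y) \<in> sB i \<longrightarrow> \<pi> x = \<pi> x'"
proof -
  have H: "Hausdorff_space T" using TS by (simp add: top_structure_def)
  have K: "closedin T {y2}" using closedin_Hausdorff_singleton[OF H y2] .
  obtain V where V: "openin T V" "closedin T V" "y1 \<in> V" "V \<inter> {y2} = {}"
    using sep[OF TS y1 K] ne by blast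
  obtain A :: "nat set" and sA and psi where A: "in_F m A sA"
    and E: "epimorphism m n T s p (ext_univ n A) (ext_rel n sA) ext_const psi"
    and sepV: "\<forall>x\<in>topspace T. \<forall>y\<in>topspace T. psi x = psi y \<longrightarrow> (x \<in> V \<longleftrightarrow> y \<in> V)"
    using L2sep[OF P V(1,2)] by blast
  have pne: "psi y1 \<noteq> psi y2" using sepV y1 y2 V(3,4) by blast
  obtain B :: "(nat \<times> (nat \<times> nat \<Rightarrow> nat \<times> nat)) set" and sB and \<pi> where
    B: "in_F m B sB" "\<pi> ` B = A" "\<forall>k\<in>{1..m}. (\<lambda>(x, y). (\<pi> x, \<pi> y)) ` sB k = sA k"
    "\<forall>k\<in>{1..m}. \<forall>x y y'. (x, y) \<in> sB k \<longrightarrow> (x, y') \<in> sB k \<longrightarrow> \<pi> y = \<pi> y'"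
    "\<forall>k\<in>{1..m}. \<forall>x x' y. (x, y) \<in> sB k \<longrightarrow> (x', y) \<in> sB k \<longrightarrow> \<pi> x = \<pi> x'"
    using refinement[OF A] by blast
  obtain chi where C: "epimorphism m n T s p (ext_univ n B) (ext_rel n sB) ext_const chi"
    using L1gen[OF P B(1)] by blast
  have E2: "epimorphism m n T s p (ext_univ n A) (ext_rel n sA) ext_const (map_sum \<pi> id \<circ> chi)"
    by (rule epi_comp[OF C B(2) B(3)])
  obtain \<alpha> where al: "automorphism m n T s p \<alpha>" "\<forall>x\<in>topspace T. psi x = (map_sum \<pi> id \<circ> chi) (\<alpha> x)"
    using PL3[OF P A E E2] by blast
  have f4: "\<forall>x y y'. (x, y) \<in> sB i \<longrightarrow> (x, y') \<in> sB i \<longrightarrow> \<pi> y = \<pi> y'"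
    using B(4) i by (rule bspec)
  have f5: "\<forall>x x' y. (x, y) \<in> sB i \<longrightarrow> (x', y) \<in> sB i \<longrightarrow> \<pi> x = \<pi> x'"
    using B(5) i by (rule bspec)
  show ?thesis
    using pne al(1) al(2) C f4 f5 by (rule that)
qed

theorem lemma3p8:
  fixes m n :: nat and T :: "'a topology" and s :: "nat \<Rightarrow> ('a \<times> 'a) set" and p :: "nat \<Rightarrow> 'a"
  assumes "proj_fraisse_limit m n T s p"
  shows "\<forall>i\<in>{1..m}. \<exists>h. homeomorphic_map T T h \<and>
            s i = {(x, h x) | x. x \<in> topspace T} \<and>
            (\<forall>j\<in>{1..n}. h (p j) = p j)"
proof
  fix i assume i: "i \<in> {1..m}"
  have P: "proj_fraisse_limit m n T s p" by (rule assms)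
  have TS: "top_structure m n T s p" by (rule PTS[OF P])
  have H: "Hausdorff_space T" and C: "compact_space T" and S: "closedin (prod_topology T T) (s i)"
    and pin: "\<forall>j\<in>{1..n}. p j \<in> topspace T"
    using TS i by (auto simp: top_structure_def)
  have Ssub: "s i \<subseteq> topspace T \<times> topspace T" using closedin_subset[OF S] by simp
  have CP: "compact_space (prod_topology T T)" using C by (simp add: compact_space_prod_topology)
  have Scomp: "compactin (prod_topology T T) (s i)" using closedin_compact_space[OF CP S] .
  have Dcl: "closedin T (fst ` s i)"
    using compactin_imp_closedin[OF H image_compactin[OF Scomp continuous_map_fst]] .
  have Rcl: "closedin T (snd ` s i)"
    using compactin_imp_closedin[OF H image_compactin[OF Scomp continuous_map_snd]] .
  have ex_succ: "\<exists>y. (x, y) \<in> s i" if x: "x \<in> topspace T" for x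
  proof (rule ccontr)
    assume nx: "\<nexists>y. (x, y) \<in> s i"
    then have "x \<notin> fst ` s i" by force
    then obtain V where V: "openin T V" "closedin T V" "x \<in> V" "V \<inter> fst ` s i = {}"
      using sep[OF TS x Dcl] by blast
    obtain A :: "nat set" and sA and psi where A: "in_F m A sA"
      and E: "epimorphism m n T s p (ext_univ n A) (ext_rel n sA) ext_const psi"
      and sepV: "\<forall>x\<in>topspace T. \<forall>y\<in>topspace T. psi x = psi y \<longrightarrow> (x \<in> V \<longleftrightarrow> y \<in> V)"
      using L2sep[OF P V(1,2)] by blast
    obtain w where "(psi x, w) \<in> ext_rel n sA i"
      using edge_exists[OF A i epi_in[OF E x]] by blast
    then obtain u v where uv: "(u, v) \<in> s i" "psi u = psi x"
      using epi_edge_back[OF E i] by blast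
    have "u \<in> topspace T" using uv Ssub by blast
    then have "u \<in> V" using sepV x uv(2) V(3) by blast
    then show False using V(4) uv(1) by force
  qed
  have ex_pred: "\<exists>x. (x, y) \<in> s i" if y: "y \<in> topspace T" for y
  proof (rule ccontr)
    assume nx: "\<nexists>x. (x, y) \<in> s i"
    then have "y \<notin> snd ` s i" by force
    then obtain V where V: "openin T V" "closedin T V" "y \<in> V" "V \<inter> snd ` s i = {}"
      using sep[OF TS y Rcl] by blast
    obtain A :: "nat set" and sA and psi where A: "in_F m A sA"
      and E: "epimorphism m n T s p (ext_univ n A) (ext_rel n sA) ext_const psi"
      and sepV: "\<forall>x\<in>topspace T. \<forall>y\<in>topspace T. psi x = psi y \<longrightarrow> (x \<in> V \<longleftrightarrow> y \<in> V)"
      using L2sep[OF P V(1,2)] by blast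
    obtain w where "(w, psi y) \<in> ext_rel n sA i"
      using edge_exists[OF A i epi_in[OF E y]] by blast
    then obtain u v where uv: "(u, v) \<in> s i" "psi v = psi y"
      using epi_edge_back[OF E i] by blast
    have "v \<in> topspace T" using uv Ssub by blast
    then have "v \<in> V" using sepV y uv(2) V(3) by blast
    then show False using V(4) uv(1) by force
  qed
  have un_succ: "y1 = y2" if e: "(x, y1) \<in> s i" "(x, y2) \<in> s i" for x y1 y2
  proof (rule ccontr)
    assume ne: "y1 \<noteq> y2"
    have y: "x \<in> topspace T" "y1 \<in> topspace T" "y2 \<in> topspace T" using e Ssub by auto
    obtain psi and B :: "(nat \<times> (nat \<times> nat \<Rightarrow> nat \<times> nat)) set" and sB and \<pi> :: "nat \<times> (nat \<times> nat \<Rightarrow> nat \<times> nat) \<Rightarrow> nat" and chi and \<alpha>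
      where U: "psi y1 \<noteq> psi y2" "automorphism m n T s p \<alpha>"
      "\<forall>x\<in>topspace T. psi x = (map_sum \<pi> id \<circ> chi) (\<alpha> x)"
      "epimorphism m n T s p (ext_univ n B) (ext_rel n sB) ext_const chi"
      "\<forall>x y y'. (x, y) \<in> sB i \<longrightarrow> (x, y') \<in> sB i \<longrightarrow> \<pi> y = \<pi> y'"
      "\<forall>x x' y. (x, y) \<in> sB i \<longrightarrow> (x', y) \<in> sB i \<longrightarrow> \<pi> x = \<pi> x'"
      by (rule uniq_aux[OF P i TS y(2,3) ne])
    have "(chi (\<alpha> x), chi (\<alpha> y1)) \<in> ext_rel n sB i"
      by (rule epi_edge[OF U(4) i aut_edge[OF U(2) i e(1)]])
    moreover have "(chi (\<alpha> x), chi (\<alpha> y2)) \<in> ext_rel n sB i"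
      by (rule epi_edge[OF U(4) i aut_edge[OF U(2) i e(2)]])
    ultimately have "map_sum \<pi> id (chi (\<alpha> y1)) = map_sum \<pi> id (chi (\<alpha> y2))"
      by (rule fine_ext[where sB=sB and i=i and \<pi>=\<pi>, OF U(5)])
    then have "psi y1 = psi y2" using U(3) y(2,3) by simp
    then show False using U(1) by blast
  qed
  have un_pred: "x1 = x2" if e: "(x1, y) \<in> s i" "(x2, y) \<in> s i" for x1 x2 y
  proof (rule ccontr)
    assume ne: "x1 \<noteq> x2"
    have y: "y \<in> topspace T" "x1 \<in> topspace T" "x2 \<in> topspace T" using e Ssub by auto
    obtain psi and B :: "(nat \<times> (nat \<times> nat \<Rightarrow> nat \<times> nat)) set" and sB and \<pi> :: "nat \<times> (nat \<times> nat \<Rightarrow> nat \<times> nat) \<Rightarrow> nat" and chi and \<alpha>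
      where U: "psi x1 \<noteq> psi x2" "automorphism m n T s p \<alpha>"
      "\<forall>x\<in>topspace T. psi x = (map_sum \<pi> id \<circ> chi) (\<alpha> x)"
      "epimorphism m n T s p (ext_univ n B) (ext_rel n sB) ext_const chi"
      "\<forall>x y y'. (x, y) \<in> sB i \<longrightarrow> (x, y') \<in> sB i \<longrightarrow> \<pi> y = \<pi> y'"
      "\<forall>x x' y. (x, y) \<in> sB i \<longrightarrow> (x', y) \<in> sB i \<longrightarrow> \<pi> x = \<pi> x'"
      by (rule uniq_aux[OF P i TS y(2,3) ne])
    have "(chi (\<alpha> x1), chi (\<alpha> y)) \<in> ext_rel n sB i"
      by (rule epi_edge[OF U(4) i aut_edge[OF U(2) i e(1)]])
    moreover have "(chi (\<alpha> x2), chi (\<alpha> y)) \<in> ext_rel n sB i"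
      by (rule epi_edge[OF U(4) i aut_edge[OF U(2) i e(2)]])
    ultimately have "map_sum \<pi> id (chi (\<alpha> x1)) = map_sum \<pi> id (chi (\<alpha> x2))"
      by (rule fine_ext_pred[where sB=sB and i=i and \<pi>=\<pi>, OF U(6)])
    then have "psi x1 = psi x2" using U(3) y(2,3) by simp
    then show False using U(1) by blast
  qed
  have u1: "\<forall>x\<in>topspace T. \<exists>!y. (x, y) \<in> s i" using ex_succ un_succ by blast
  have u2: "\<forall>y\<in>topspace T. \<exists>!x. (x, y) \<in> s i" using ex_pred un_pred by blast
  obtain h where hh: "homeomorphic_map T T h" and gr: "s i = {(x, h x) | x. x \<in> topspace T}"
    using graph_homeo[OF H C S u1 u2] by blast
  have hfix: "h (p j) = p j" if j: "j \<in> {1..n}" for j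
  proof (rule ccontr)
    assume ne: "h (p j) \<noteq> p j"
    have pj: "p j \<in> topspace T" using pin j by blast
    have e: "(p j, h (p j)) \<in> s i" using gr pj by blast
    have hpj: "h (p j) \<in> topspace T" using e Ssub by blast
    have K: "closedin T {h (p j)}" using closedin_Hausdorff_singleton[OF H hpj] .
    obtain V where V: "openin T V" "closedin T V" "p j \<in> V" "V \<inter> {h (p j)} = {}"
      using sep[OF TS pj K] ne by fastforce
    obtain A :: "nat set" and sA and psi where A: "in_F m A sA"
      and E: "epimorphism m n T s p (ext_univ n A) (ext_rel n sA) ext_const psi"
      and sepV: "\<forall>x\<in>topspace T. \<forall>y\<in>topspace T. psi x = psi y \<longrightarrow> (x \<in> V \<longleftrightarrow> y \<in> V)"
      using L2sep[OF P V(1,2)] by blast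
    have pp: "psi (p j) = Inr j" using E j by (simp add: epimorphism_def ext_const_def)
    have "(psi (p j), psi (h (p j))) \<in> ext_rel n sA i" by (rule epi_edge[OF E i e])
    then have "(Inr j, psi (h (p j))) \<in> ext_rel n sA i" by (simp only: pp)
    then have "psi (h (p j)) = Inr j" by (rule ext_rel_Inr)
    then have "psi (p j) = psi (h (p j))" using pp by simp
    then have "h (p j) \<in> V" using sepV pj hpj V(3) by blast
    then show False using V(4) by blast
  qed
  show "\<exists>h. homeomorphic_map T T h \<and> s i = {(x, h x) | x. x \<in> topspace T} \<and> (\<forall>j\<in>{1..n}. h (p j) = p j)"
    using hh gr hfix by blast
qed


end
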